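(* Let $\mathcal{H}_{A_1},\dots,\mathcal{H}_{A_N}$ be finite-dimensional Hilbert spaces and let $W_{A_1\cdots A_N}\in\mathcal{W}(\bigotimes_{i=1}^N\mathcal{H}_{A_i})$ be a beyond quantum state. Then there exists a semiquantum game $\mathbb{G}_{sq}$ and a choice of local measurements $M_{A_iA_i^o}$, $i=1,\dots,N$, such that the expected payoff obtained from $W_{A_1\cdots A_N}$ with these measurements is strictly negative, whereas for every density operator $\rho_{A_1\cdots A_N}\in\mathcal{D}(\bigotimes_{i=1}^N\mathcal{H}_{A_i})$ and every choice of local measurements (POVMs on $\mathcal{H}_{A_i}\otimes\mathcal{H}_{A_i^o}$ with outcome sets those of the game) the expected payoff is nonnegative. In short: $\mathcal{I}_{\mathbb{G}_{sq}}(W_{A_1\cdots A_N})<0$ while $\mathcal{I}_{\mathbb{G}_{sq}}(\rho_{A_1\cdots A_N})\ge0$ for all $\rho_{A_1\cdots A_N}\in\mathcal{D}(\bigotimes_{i=1}^N\mathcal{H}_{A_i})$.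
   Context: A POPT state on $\bigotimes_{i=1}^N\mathcal{H}_{A_i}$ is a Hermitian unit-trace operator $W$ with $\operatorname{Tr}[W(P_1\otimes\cdots\otimes P_N)]\ge0$ for all positive semidefinite $P_i$ on $\mathcal{H}_{A_i}$; the set of these is $\mathcal{W}(\bigotimes_i\mathcal{H}_{A_i})$. $\mathcal{D}(\bigotimes_i\mathcal{H}_{A_i})$ is the set of density operators. A beyond quantum state is an element of $\mathcal{W}\setminus\mathcal{D}$. An $N$-partite semiquantum game $\mathbb{G}_{sq}$ consists of finite-dimensional Hilbert spaces $\mathcal{H}_{A_i^o}$, finite families of pure states $\{\psi^{s_i}_{A_i^o}\}_{s_i\in\mathcal{S}_i}$ on $\mathcal{H}_{A_i^o}$ (quantum inputs), finite output sets $\mathcal{O}_i$, and a real payoff function $\beta:\times_{i=1}^N(\mathcal{S}_i\times\mathcal{O}_i)\to\mathbb{R}$. Given a (POPT or quantum) state $Z$ on $\bigotimes_i\mathcal{H}_{A_i}$ and POVMs $M_{A_iA_i^o}=\{\pi^{a_i}_{A_iA_i^o}\}_{a_i\in\mathcal{O}_i}$ on $\mathcal{H}_{A_i}\otimes\mathcal{H}_{A_i^o}$, the correlation is $p(a_1,\dots,a_N|\psi^{s_1},\dots,\psi^{s_N})=\operatorname{Tr}[(\bigotimes_i\pi^{a_i}_{A_iA_i^o})(Z\otimes\bigotimes_i\psi^{s_i}_{A_i^o})]$ (tensor factors reordered appropriately), and the expected payoff is $\mathcal{I}_{\mathbb{G}_{sq}}(Z)=\sum_{s_1,a_1,\dots,s_N,a_N}\beta(s_1,a_1,\dots,s_N,a_N)\,p(a_1,\dots,a_N|\psi^{s_1},\dots,\psi^{s_N})$.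 *)

theory Defs
  imports Complex_Main "HOL-Library.Complex_Order"
begin

text \<open>Finite-dimensional spaces are modelled by explicit orthonormal bases.
  An operator on a space with basis index set I is a function I -> I -> complex
  (matrix entries; values outside I are irrelevant).  The N-partite space
  H_{A_1} x ... x H_{A_N} with dim H_{A_i} = d i has basis index set
  tuples N (lambda i. {..<d i}) (lists of length N).\<close>

definition tuples :: "nat \<Rightarrow> (nat \<Rightarrow> 'a set) \<Rightarrow> 'a list set" where
  "tuples N S = {xs. length xs = N \<and> (\<forall>i<N. xs ! i \<in> S i)}"

definition idx :: "nat \<Rightarrow> (nat \<Rightarrow> nat) \<Rightarrow> nat list set" where
  "idx N d = tuples N (\<lambda>i. {..<d i})"

definition hermitian_on :: "'a set \<Rightarrow> ('a \<Rightarrow> 'a \<Rightarrow> complex) \<Rightarrow> bool" where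
  "hermitian_on I P \<longleftrightarrow> (\<forall>r\<in>I. \<forall>c\<in>I. P c r = cnj (P r c))"

text \<open>Positive semidefinite: all quadratic forms are (real and) nonnegative
  (complex order from HOL-Library.Complex_Order).\<close>
definition psd_on :: "'a set \<Rightarrow> ('a \<Rightarrow> 'a \<Rightarrow> complex) \<Rightarrow> bool" where
  "psd_on I P \<longleftrightarrow> (\<forall>v :: 'a \<Rightarrow> complex. 0 \<le> (\<Sum>r\<in>I. \<Sum>c\<in>I. cnj (v r) * P r c * v c))"

definition op_trace :: "'a set \<Rightarrow> ('a \<Rightarrow> 'a \<Rightarrow> complex) \<Rightarrow> complex" where
  "op_trace I P = (\<Sum>r\<in>I. P r r)"

text \<open>POPT states W(H_{A_1} x ... x H_{A_N}):
  Tr[W (P_1 x ... x P_N)] >= 0 for all PSD P_i.\<close>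
definition is_POPT :: "nat \<Rightarrow> (nat \<Rightarrow> nat) \<Rightarrow> (nat list \<Rightarrow> nat list \<Rightarrow> complex) \<Rightarrow> bool" where
  "is_POPT N d W \<longleftrightarrow> hermitian_on (idx N d) W \<and> op_trace (idx N d) W = 1 \<and>
     (\<forall>P :: nat \<Rightarrow> nat \<Rightarrow> nat \<Rightarrow> complex. (\<forall>i<N. psd_on {..<d i} (P i)) \<longrightarrow>
        0 \<le> (\<Sum>r\<in>idx N d. \<Sum>c\<in>idx N d. W r c * (\<Prod>i<N. P i (c ! i) (r ! i))))"

definition is_density :: "nat \<Rightarrow> (nat \<Rightarrow> nat) \<Rightarrow> (nat list \<Rightarrow> nat list \<Rightarrow> complex) \<Rightarrow> bool" where
  "is_density N d \<rho> \<longleftrightarrow> hermitian_on (idx N d) \<rho> \<and> psd_on (idx N d) \<rho> \<and> op_trace (idx N d) \<rho> = 1"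

definition is_POVM :: "'a set \<Rightarrow> 'b set \<Rightarrow> ('b \<Rightarrow> 'a \<Rightarrow> 'a \<Rightarrow> complex) \<Rightarrow> bool" where
  "is_POVM I Out \<pi> \<longleftrightarrow> (\<forall>a\<in>Out. psd_on I (\<pi> a)) \<and>
     (\<forall>r\<in>I. \<forall>c\<in>I. (\<Sum>a\<in>Out. \<pi> a r c) = (if r = c then 1 else 0))"

definition unit_vector :: "nat \<Rightarrow> (nat \<Rightarrow> complex) \<Rightarrow> bool" where
  "unit_vector n v \<longleftrightarrow> (\<Sum>k<n. (cmod (v k))\<^sup>2) = 1"

text \<open>Semiquantum game data: ancilla dimensions e i = dim H_{A_i^o}, finite input
  sets S i, pure input states psi i s (as unit vectors; the state is |psi><psi|),
  finite output sets Out i.  The payoff beta is an arbitrary real function on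
  (input tuple, output tuple).\<close>
definition semiquantum_game :: "nat \<Rightarrow> (nat \<Rightarrow> nat) \<Rightarrow> (nat \<Rightarrow> nat set) \<Rightarrow> (nat \<Rightarrow> nat set)
     \<Rightarrow> (nat \<Rightarrow> nat \<Rightarrow> nat \<Rightarrow> complex) \<Rightarrow> bool" where
  "semiquantum_game N e S Out \<psi> \<longleftrightarrow> (\<forall>i<N. 0 < e i \<and> finite (S i) \<and> finite (Out i) \<and>
       (\<forall>s\<in>S i. unit_vector (e i) (\<psi> i s)))"

text \<open>Local measurements: party i has a POVM on H_{A_i} x H_{A_i^o}
  (basis index set {..<d i} x {..<e i}) with outcome set Out i.\<close>
definition local_measurements :: "nat \<Rightarrow> (nat \<Rightarrow> nat) \<Rightarrow> (nat \<Rightarrow> nat) \<Rightarrow> (nat \<Rightarrow> nat set)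
     \<Rightarrow> (nat \<Rightarrow> nat \<Rightarrow> nat \<times> nat \<Rightarrow> nat \<times> nat \<Rightarrow> complex) \<Rightarrow> bool" where
  "local_measurements N d e Out M \<longleftrightarrow> (\<forall>i<N. is_POVM ({..<d i} \<times> {..<e i}) (Out i) (M i))"

text \<open>p(a|psi^s) = Tr[(x_i pi^{a_i}) (Z x (x_i |psi^{s_i}><psi^{s_i}|))], written out
  in coordinates with the tensor factors reordered party-wise.\<close>
definition correlation :: "nat \<Rightarrow> (nat \<Rightarrow> nat) \<Rightarrow> (nat \<Rightarrow> nat) \<Rightarrow> (nat \<Rightarrow> nat \<Rightarrow> nat \<Rightarrow> complex)
     \<Rightarrow> (nat \<Rightarrow> nat \<Rightarrow> nat \<times> nat \<Rightarrow> nat \<times> nat \<Rightarrow> complex) \<Rightarrow> (nat list \<Rightarrow> nat list \<Rightarrow> complex)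
     \<Rightarrow> nat list \<Rightarrow> nat list \<Rightarrow> complex" where
  "correlation N d e \<psi> M Z s a =
     (\<Sum>j\<in>idx N d. \<Sum>k\<in>idx N e. \<Sum>j'\<in>idx N d. \<Sum>k'\<in>idx N e.
        (\<Prod>i<N. M i (a ! i) (j ! i, k ! i) (j' ! i, k' ! i)) * Z j' j *
        (\<Prod>i<N. \<psi> i (s ! i) (k' ! i) * cnj (\<psi> i (s ! i) (k ! i))))"

text \<open>Expected payoff I_G(Z) = sum_{s,a} beta(s,a) p(a|s).  The probabilities are
  real for Hermitian Z; we take the real part to obtain a real-valued payoff.\<close>
definition expected_payoff :: "nat \<Rightarrow> (nat \<Rightarrow> nat) \<Rightarrow> (nat \<Rightarrow> nat) \<Rightarrow> (nat \<Rightarrow> nat set) \<Rightarrow> (nat \<Rightarrow> nat set)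
     \<Rightarrow> (nat \<Rightarrow> nat \<Rightarrow> nat \<Rightarrow> complex) \<Rightarrow> (nat list \<Rightarrow> nat list \<Rightarrow> real)
     \<Rightarrow> (nat \<Rightarrow> nat \<Rightarrow> nat \<times> nat \<Rightarrow> nat \<times> nat \<Rightarrow> complex) \<Rightarrow> (nat list \<Rightarrow> nat list \<Rightarrow> complex) \<Rightarrow> real" where
  "expected_payoff N d e S Out \<psi> \<beta> M Z =
     (\<Sum>s\<in>tuples N S. \<Sum>a\<in>tuples N Out. \<beta> s a * Re (correlation N d e \<psi> M Z s a))"

end

theory Submission
  imports Defs "HOL-Analysis.L2_Norm" "HOL-Library.Nat_Bijection"
begin


definition qf :: "'a set \<Rightarrow> ('a \<Rightarrow> 'a \<Rightarrow> complex) \<Rightarrow> ('a \<Rightarrow> complex) \<Rightarrow> complex" where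
  "qf I P v = (\<Sum>r\<in>I. \<Sum>c\<in>I. cnj (v r) * P r c * v c)"

lemma psd_qf: "psd_on I P \<longleftrightarrow> (\<forall>v. 0 \<le> qf I P v)"
  by (simp add: psd_on_def qf_def)

lemma qf_restrict:
  assumes "finite I" "J \<subseteq> I"
  shows "qf I P (\<lambda>r. if r \<in> J then v r else 0) = qf J P v"
proof -
  have "qf I P (\<lambda>r. if r \<in> J then v r else 0) = (\<Sum>r\<in>J. \<Sum>c\<in>I. cnj (if r \<in> J then v r else 0) * P r c * (if c \<in> J then v c else 0))"
    unfolding qf_def by (rule sum.mono_neutral_right) (use assms in auto)
  also have "\<dots> = (\<Sum>r\<in>J. \<Sum>c\<in>J. cnj (if r \<in> J then v r else 0) * P r c * (if c \<in> J then v c else 0))"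
    by (rule sum.cong[OF refl], rule sum.mono_neutral_right) (use assms in auto)
  also have "\<dots> = qf J P v" unfolding qf_def by (auto intro!: sum.cong)
  finally show ?thesis .
qed

lemma psd_mono: "finite I \<Longrightarrow> J \<subseteq> I \<Longrightarrow> psd_on I P \<Longrightarrow> psd_on J P"
  unfolding psd_qf
proof (intro allI)
  fix v assume "finite I" "J \<subseteq> I" "\<forall>v. 0 \<le> qf I P v"
  then show "0 \<le> qf J P v" using qf_restrict[of I J P v] spec[OF \<open>\<forall>v. 0 \<le> qf I P v\<close>, of "\<lambda>r. if r \<in> J then v r else 0"] by simp
qed

lemma psd2:
  assumes "finite I" "psd_on I P" "r \<in> I" "c \<in> I" "r \<noteq> c"
  shows "0 \<le> cnj a * P r r * a + cnj a * P r c * b + cnj b * P c r * a + cnj b * P c c * b"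
proof -
  have "psd_on {r, c} P" using psd_mono[OF assms(1) _ assms(2), of "{r,c}"] assms by blast
  then have "0 \<le> qf {r,c} P (\<lambda>x. if x = r then a else b)" unfolding psd_qf by blast
  then show ?thesis using assms(5) by (simp add: qf_def algebra_simps)
qed

lemma psd1:
  assumes "finite I" "psd_on I P" "r \<in> I"
  shows "0 \<le> P r r"
proof -
  have "psd_on {r} P" using psd_mono[OF assms(1) _ assms(2), of "{r}"] assms by blast
  then have "0 \<le> qf {r} P (\<lambda>x. 1)" unfolding psd_qf by blast
  then show ?thesis by (simp add: qf_def)
qed

lemma psd_herm:
  assumes "finite I" "psd_on I P" "r \<in> I" "c \<in> I"
  shows "P c r = cnj (P r c)"
proof (cases "r = c")
  case True
  then show ?thesis using psd1[OF assms(1,2,3)] by (simp add: less_eq_complex_def complex_eq_iff)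
next
  case False
  have h1: "0 \<le> P r r" "0 \<le> P c c" by (rule psd1[OF assms(1,2,3)], rule psd1[OF assms(1,2,4)])
  have a: "0 \<le> P r r + P r c + P c r + P c c"
    using psd2[OF assms False, of 1 1] by simp
  have b: "0 \<le> P r r + \<i> * P r c - \<i> * P c r + P c c"
    using psd2[OF assms False, of 1 "\<i>"] by (simp add: algebra_simps)
  have "Im (P r c) + Im (P c r) = 0" "Re (P r c) = Re (P c r)"
    using a b h1 unfolding less_eq_complex_def by auto
  then show ?thesis by (simp add: complex_eq_iff)
qed

lemma sum_if_const: "(\<Sum>c\<in>I. if Q then f c else 0) = (if Q then sum f I else 0)"
  by auto

lemma qf_add:
  assumes "finite I" "x \<in> I"
  shows "qf I P (\<lambda>r. v r + (if r = x then t else 0)) = qf I P v + cnj t * (\<Sum>c\<in>I. P x c * v c)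
     + t * (\<Sum>r\<in>I. cnj (v r) * P r x) + cnj t * t * P x x"
proof -
  have e: "cnj (v r + (if r = x then t else 0)) * P r c * (v c + (if c = x then t else 0)) =
     cnj (v r) * P r c * v c + (if r = x then cnj t * (P x c * v c) else 0)
     + (if c = x then t * (cnj (v r) * P r x) else 0) + (if r = x then (if c = x then cnj t * t * P x x else 0) else 0)" for r c
    by (cases "r = x"; cases "c = x"; simp add: distrib_left distrib_right mult.assoc mult.left_commute)
  have s1: "(\<Sum>r\<in>I. \<Sum>c\<in>I. if r = x then cnj t * (P x c * v c) else 0) = cnj t * (\<Sum>c\<in>I. P x c * v c)"
    using assms by (simp add: sum_if_const sum_distrib_left)
  have s2: "(\<Sum>r\<in>I. \<Sum>c\<in>I. if c = x then t * (cnj (v r) * P r x) else 0) = t * (\<Sum>r\<in>I. cnj (v r) * P r x)"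
    using assms by (simp add: sum_distrib_left)
  have s3: "(\<Sum>r\<in>I. \<Sum>c\<in>I. if r = x then (if c = x then cnj t * t * P x x else 0) else 0) = cnj t * t * P x x"
    using assms by (simp add: sum_if_const)
  show ?thesis unfolding qf_def by (simp only: e sum.distrib s1 s2 s3)
qed


lemma psd_zero_row:
  assumes fin: "finite I" and psd: "psd_on I P" and x: "x \<in> I" and c: "c \<in> I" and p0: "P x x = 0"
  shows "P x c = 0"
proof (rule ccontr)
  assume w0: "P x c \<noteq> 0"
  then have cx: "x \<noteq> c" using p0 by auto
  have herm: "P c x = cnj (P x c)" using psd_herm[OF fin psd x c] .
  define w where "w = P x c"
  define s where "s = (Re (P c c) + 1) / (2 * (cmod w)^2)"
  define t where "t = - (complex_of_real s) * w"
  have "0 \<le> cnj t * P x x * t + cnj t * P x c * 1 + cnj 1 * P c x * t + cnj 1 * P c c * 1"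
    by (rule psd2[OF fin psd x c cx])
  then have "0 \<le> Re (cnj t * w + cnj w * t) + Re (P c c)"
    using p0 herm unfolding less_eq_complex_def w_def by simp
  moreover have "Re (cnj t * w + cnj w * t) = -2 * s * (cmod w)^2"
    using cmod_power2[of w] by (simp add: t_def algebra_simps power2_eq_square)
  moreover have "2 * s * (cmod w)^2 = Re (P c c) + 1"
    using w0 by (simp add: s_def w_def)
  ultimately show False by linarith
qed

lemma psd_dec:
  assumes "finite I" "psd_on I P"
  shows "\<exists>(n::nat) b. \<forall>r\<in>I. \<forall>c\<in>I. P r c = (\<Sum>t<n. b t r * cnj (b t c))"
  using assms
proof (induction I arbitrary: P rule: finite_induct)
  case empty
  show ?case by auto
next
  case (insert x F P)
  let ?I = "insert x F"
  have fin: "finite ?I" using insert by auto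
  have psd: "psd_on ?I P" using insert.prems .
  have xI: "x \<in> ?I" by simp
  have herm: "\<And>r c. r \<in> ?I \<Longrightarrow> c \<in> ?I \<Longrightarrow> P c r = cnj (P r c)"
    using psd_herm[OF fin psd] by blast
  have pge: "0 \<le> P x x" using psd1[OF fin psd xI] .
  show ?case
  proof (cases "P x x = 0")
    case True
    have z1: "P x c = 0" if "c \<in> ?I" for c using psd_zero_row[OF fin psd xI that True] .
    have z2: "P c x = 0" if "c \<in> ?I" for c using herm[OF xI that] z1[OF that] by simp
    have "psd_on F P" using psd_mono[OF fin _ psd, of F] by blast
    then obtain n :: nat and b where nb: "\<forall>r\<in>F. \<forall>c\<in>F. P r c = (\<Sum>t<n. b t r * cnj (b t c))"
      using insert.IH[OF \<open>psd_on F P\<close>] by blast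
    define b' where "b' t r = (if r = x then 0 else b t r)" for t r
    have "\<forall>r\<in>?I. \<forall>c\<in>?I. P r c = (\<Sum>t<n. b' t r * cnj (b' t c))"
    proof (intro ballI)
      fix r c assume r: "r \<in> ?I" and c: "c \<in> ?I"
      show "P r c = (\<Sum>t<n. b' t r * cnj (b' t c))"
      proof (cases "r = x \<or> c = x")
        case True
        then show ?thesis using z1 z2 r c by (auto simp: b'_def)
      next
        case False
        then show ?thesis using nb r c by (auto simp: b'_def)
      qed
    qed
    then show ?thesis by blast
  next
    case False
    define p where "p = P x x"
    have pr: "Im p = 0" "Re p > 0" using pge False unfolding p_def less_eq_complex_def
      by (auto simp: complex_eq_iff)
    have cp: "cnj p = p" using pr by (simp add: complex_eq_iff)
    have p0: "p \<noteq> 0" using False p_def by simp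
    define P' where "P' r c = P r c - P r x * P x c / p" for r c
    have "psd_on ?I P'"
      unfolding psd_qf
    proof
      fix v
      define W where "W = (\<Sum>c\<in>?I. P x c * v c)"
      define t where "t = - W / p"
      have cW: "(\<Sum>r\<in>?I. cnj (v r) * P r x) = cnj W"
        unfolding W_def cnj_sum by (rule sum.cong) (auto simp: herm[OF xI])
      have "qf ?I P (\<lambda>r. v r + (if r = x then t else 0)) = qf ?I P v + cnj t * W + t * cnj W + cnj t * t * p"
        using qf_add[OF fin xI, of P v t] cW by (simp add: W_def p_def)
      also have "\<dots> = qf ?I P v - cnj W * W / p"
        using p0 cp by (simp add: t_def field_simps)
      also have "\<dots> = qf ?I P' v"
      proof -
        have "qf ?I P' v = qf ?I P v - (\<Sum>r\<in>?I. \<Sum>c\<in>?I. (cnj (v r) * P r x) * (P x c * v c) / p)"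
          unfolding qf_def P'_def by (simp add: sum_subtractf algebra_simps)
        also have "(\<Sum>r\<in>?I. \<Sum>c\<in>?I. (cnj (v r) * P r x) * (P x c * v c) / p) =
            (\<Sum>r\<in>?I. cnj (v r) * P r x) * (\<Sum>c\<in>?I. P x c * v c) / p"
          by (simp only: sum_product sum_divide_distrib)
        also have "\<dots> = cnj W * W / p" using cW by (simp add: W_def)
        finally show ?thesis by simp
      qed
      finally have "qf ?I P' v = qf ?I P (\<lambda>r. v r + (if r = x then t else 0))" by simp
      then show "0 \<le> qf ?I P' v" using psd unfolding psd_qf by simp
    qed
    then have "psd_on F P'" using psd_mono[OF fin _, of F P'] by blast
    then obtain n :: nat and b where nb: "\<forall>r\<in>F. \<forall>c\<in>F. P' r c = (\<Sum>t<n. b t r * cnj (b t c))"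
      using insert.IH[OF \<open>psd_on F P'\<close>] by blast
    define b0 where "b0 r = P r x / complex_of_real (sqrt (Re p))" for r
    define b' where "b' t r = (if t < n then (if r = x then 0 else b t r) else b0 r)" for t r
    have "\<forall>r\<in>?I. \<forall>c\<in>?I. P r c = (\<Sum>t<Suc n. b' t r * cnj (b' t c))"
    proof (intro ballI)
      fix r c assume r: "r \<in> ?I" and c: "c \<in> ?I"
      have sq: "complex_of_real (sqrt (Re p)) * complex_of_real (sqrt (Re p)) = p"
        using pr by (simp add: complex_eq_iff flip: of_real_mult)
      have b0e: "b0 r * cnj (b0 c) = P r x * P x c / p"
        using herm[OF xI c] sq by (simp add: b0_def field_simps)
      have P'e: "P' r c = (\<Sum>t<n. b' t r * cnj (b' t c))"
      proof (cases "r = x \<or> c = x")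
        case True
        then have "P' r c = 0" using p0 unfolding P'_def p_def by auto
        then show ?thesis using True by (auto simp: b'_def)
      next
        case False
        then show ?thesis using nb r c by (auto simp: b'_def)
      qed
      have "P r c = P' r c + b0 r * cnj (b0 c)" using b0e by (simp add: P'_def)
      also have "\<dots> = (\<Sum>t<Suc n. b' t r * cnj (b' t c))"
        using P'e by (simp add: b'_def)
      finally show "P r c = (\<Sum>t<Suc n. b' t r * cnj (b' t c))" .
    qed
    then show ?thesis by blast
  qed
qed



lemma tuples_Suc: "tuples (Suc N) S = (\<lambda>(xs,x). xs @ [x]) ` (tuples N S \<times> S N)"
proof
  show "tuples (Suc N) S \<subseteq> (\<lambda>(xs,x). xs @ [x]) ` (tuples N S \<times> S N)"
  proof
    fix ys assume ys: "ys \<in> tuples (Suc N) S"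
    then have l: "length ys = Suc N" and m: "\<forall>i<Suc N. ys ! i \<in> S i" by (auto simp: tuples_def)
    then have ys_eq: "ys = butlast ys @ [last ys]"
      by (metis append_butlast_last_id list.size(3) nat.distinct(1))
    have "butlast ys \<in> tuples N S"
      using l m by (auto simp: tuples_def nth_butlast)
    moreover have "last ys \<in> S N"
      using l m by (metis diff_Suc_1 last_conv_nth lessI list.size(3) nat.distinct(1))
    ultimately show "ys \<in> (\<lambda>(xs,x). xs @ [x]) ` (tuples N S \<times> S N)"
      using ys_eq by (auto intro!: image_eqI[of _ _ "(butlast ys, last ys)"])
  qed
next
  show "(\<lambda>(xs,x). xs @ [x]) ` (tuples N S \<times> S N) \<subseteq> tuples (Suc N) S"
    by (auto simp: tuples_def nth_append less_Suc_eq)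
qed

lemma tuples_0: "tuples 0 S = {[]}"
  by (auto simp: tuples_def)

lemma finite_tuples: "(\<forall>i<N. finite (S i)) \<Longrightarrow> finite (tuples N S)"
proof (induction N)
  case 0 then show ?case by (simp add: tuples_0)
next
  case (Suc N) then show ?case by (simp add: tuples_Suc)
qed

lemma inj_snoc: "inj_on (\<lambda>(xs,x). xs @ [x]) A"
  by (auto simp: inj_on_def)

lemma sum_prod_tuples:
  assumes "\<forall>i<N. finite (S i)"
  shows "(\<Sum>xs\<in>tuples N S. \<Prod>i<N. f i (xs ! i)) = (\<Prod>i<N. \<Sum>x\<in>S i. (f i x :: 'b::comm_semiring_1))"
  using assms
proof (induction N)
  case 0 then show ?case by (simp add: tuples_0)
next
  case (Suc N)
  have fin: "finite (tuples N S)" "finite (S N)" using Suc.prems finite_tuples[of N S] by auto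
  have "(\<Sum>xs\<in>tuples (Suc N) S. \<Prod>i<Suc N. f i (xs ! i)) =
      (\<Sum>p\<in>tuples N S \<times> S N. \<Prod>i<Suc N. f i ((fst p @ [snd p]) ! i))"
    unfolding tuples_Suc by (subst sum.reindex[OF inj_snoc]) (auto intro!: sum.cong simp: split_beta)
  also have "\<dots> = (\<Sum>p\<in>tuples N S \<times> S N. (\<Prod>i<N. f i (fst p ! i)) * f N (snd p))"
  proof (rule sum.cong[OF refl])
    fix p assume "p \<in> tuples N S \<times> S N"
    then have l: "length (fst p) = N" by (auto simp: tuples_def)
    have "(\<Prod>i<N. f i ((fst p @ [snd p]) ! i)) = (\<Prod>i<N. f i (fst p ! i))"
      by (rule prod.cong) (auto simp: nth_append l)
    then show "(\<Prod>i<Suc N. f i ((fst p @ [snd p]) ! i)) = (\<Prod>i<N. f i (fst p ! i)) * f N (snd p)"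
      by (simp add: l nth_append)
  qed
  also have "\<dots> = (\<Sum>xs\<in>tuples N S. \<Sum>x\<in>S N. (\<Prod>i<N. f i (xs ! i)) * f N x)"
    by (simp add: sum.cartesian_product split_beta)
  also have "\<dots> = (\<Sum>xs\<in>tuples N S. \<Prod>i<N. f i (xs ! i)) * (\<Sum>x\<in>S N. f N x)"
    by (simp add: sum_product)
  also have "\<dots> = (\<Prod>i<Suc N. \<Sum>x\<in>S i. f i x)"
    using Suc by simp
  finally show ?case .
qed

lemma prod_delta_list:
  assumes "length k = N" "length r = N"
  shows "(\<Prod>i<N. (if k ! i = r ! i then 1 else 0 :: 'b::comm_semiring_1)) = (if k = r then 1 else 0)"
proof (cases "k = r")
  case True then show ?thesis by simp
next
  case False
  have "\<exists>i<N. k ! i \<noteq> r ! i"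
  proof (rule ccontr)
    assume "\<not> (\<exists>i<N. k ! i \<noteq> r ! i)"
    then have "k = r" using assms by (intro nth_equalityI) auto
    then show False using False by simp
  qed
  then obtain i where "i < N" "k ! i \<noteq> r ! i" by blast
  then show ?thesis using False by (auto intro!: prod_zero)
qed

lemma sum_delta_tuples:
  assumes "\<forall>i<N. finite (S i)" "k \<in> tuples N S"
  shows "(\<Sum>r\<in>tuples N S. F r * (\<Prod>i<N. if k ! i = r ! i then 1 else 0)) = (F k :: 'b::comm_semiring_1)"
proof -
  have "(\<Sum>r\<in>tuples N S. F r * (\<Prod>i<N. if k ! i = r ! i then 1 else 0)) =
        (\<Sum>r\<in>tuples N S. if k = r then F r else 0)"
    using assms(2) by (intro sum.cong refl) (simp add: prod_delta_list tuples_def)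
  also have "\<dots> = F k" using assms finite_tuples[of N S] by simp
  finally show ?thesis .
qed



definition enc3 :: "nat \<times> nat \<times> nat \<Rightarrow> nat" where
  "enc3 t = prod_encode (fst t, prod_encode (snd t))"
definition dec3 :: "nat \<Rightarrow> nat \<times> nat \<times> nat" where
  "dec3 s = (fst (prod_decode s), prod_decode (snd (prod_decode s)))"

lemma dec3_enc3[simp]: "dec3 (enc3 t) = t"
  by (simp add: enc3_def dec3_def)

lemma inj_enc3: "inj_on enc3 A"
  by (metis dec3_enc3 inj_on_inverseI)

definition Sg :: "nat \<Rightarrow> nat set" where
  "Sg D = enc3 ` ({..<D} \<times> {..<D} \<times> {..<4})"

definition dl :: "nat \<Rightarrow> nat \<Rightarrow> complex" where
  "dl a b = (if a = b then 1 else 0)"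

definition phi3 :: "nat \<Rightarrow> nat \<Rightarrow> nat \<Rightarrow> nat \<Rightarrow> complex" where
  "phi3 k l m p = (if k = l then dl p k else (dl p k + \<i> ^ m * dl p l) / complex_of_real (sqrt 2))"

definition gam3 :: "nat \<Rightarrow> nat \<Rightarrow> nat \<Rightarrow> complex" where
  "gam3 k l m = (if k = l then (if m = 0 then 1 else 0) else \<i> ^ m / 2)"

definition phi :: "nat \<Rightarrow> nat \<Rightarrow> complex" where
  "phi s p = (case dec3 s of (k, l, m) \<Rightarrow> phi3 k l m p)"

definition gg :: "nat \<Rightarrow> nat \<Rightarrow> nat \<Rightarrow> complex" where
  "gg r c s = (case dec3 s of (k, l, m) \<Rightarrow> if k = r \<and> l = c then gam3 k l m else 0)"

lemma finite_Sg: "finite (Sg D)" by (simp add: Sg_def)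

lemma sum_Sg: "(\<Sum>s\<in>Sg D. f s) = (\<Sum>k<D. \<Sum>l<D. \<Sum>m<4. f (enc3 (k,l,m)))"
proof -
  have "(\<Sum>s\<in>Sg D. f s) = (\<Sum>t\<in>{..<D} \<times> {..<D} \<times> {..<4}. f (enc3 t))"
    unfolding Sg_def by (rule sum.reindex[OF inj_enc3, unfolded comp_def])
  also have "\<dots> = (\<Sum>k<D. \<Sum>l<D. \<Sum>m<4. f (enc3 (k,l,m)))"
    by (simp add: sum.cartesian_product split_beta)
  finally show ?thesis .
qed

lemma four: "{..<4::nat} = {0,1,2,3}" by auto

lemma if0_mult: "(if P then a else 0) * b = (if P then a * b else (0::complex))" by simp

lemma i3: "\<i> ^ 3 = - \<i>"
proof -
  have "\<i> ^ 3 = \<i> * \<i> * \<i>" by (rule power3_eq_cube)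
  then show ?thesis by simp
qed

lemma loc3:
  assumes "r \<noteq> c"
  shows "(\<Sum>m<4. gam3 r c m * (phi3 r c m p * cnj (phi3 r c m q))) = dl p r * dl q c"
proof -
  have s2: "complex_of_real (sqrt 2) * complex_of_real (sqrt 2) = 2"
    by (simp flip: of_real_mult)
  show ?thesis using assms unfolding four gam3_def phi3_def dl_def
    by (cases "p = r"; cases "p = c"; cases "q = r"; cases "q = c";
        simp add: field_simps s2 power2_eq_square i3)
qed

lemma collapse2:
  fixes D :: nat
  assumes "r < D" "c < D"
  shows "(\<Sum>k<D. \<Sum>l<D. if k = r \<and> l = c then G k l else 0) = (G r c::complex)"
proof -
  have "(\<Sum>l<D. if k = r \<and> l = c then G k l else 0) = (if k = r then G k c else 0)" for k
  proof (cases "k = r")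
    case True
    have "(\<Sum>l<D. if l = c then G k l else 0) = (if c \<in> {..<D} then G k c else 0)"
      by (rule sum.delta) simp
    then show ?thesis using True assms by simp
  qed auto
  moreover have "(\<Sum>k<D. if k = r then G k c else 0) = (if r \<in> {..<D} then G r c else 0)"
    by (rule sum.delta) simp
  ultimately show ?thesis using assms by simp
qed

lemma loc:
  assumes "r < D" "c < D"
  shows "(\<Sum>s\<in>Sg D. gg r c s * (phi s p * cnj (phi s q))) = dl p r * dl q c"
proof -
  have "(\<Sum>s\<in>Sg D. gg r c s * (phi s p * cnj (phi s q))) =
        (\<Sum>k<D. \<Sum>l<D. \<Sum>m<4. if k = r \<and> l = c then gam3 k l m * (phi3 k l m p * cnj (phi3 k l m q)) else 0)"
    unfolding sum_Sg by (simp add: gg_def phi_def if0_mult)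
  also have "\<dots> = (\<Sum>m<4. gam3 r c m * (phi3 r c m p * cnj (phi3 r c m q)))"
    using assms by (simp only: sum_if_const collapse2)
  also have "\<dots> = dl p r * dl q c"
  proof (cases "r = c")
    case True
    then show ?thesis unfolding four gam3_def phi3_def dl_def by simp
  next
    case False
    then show ?thesis by (rule loc3)
  qed
  finally show ?thesis .
qed



lemma unit_phi:
  assumes "s \<in> Sg D"
  shows "unit_vector D (phi s)"
proof -
  obtain k l m where t: "s = enc3 (k,l,m)" "k < D" "l < D" using assms by (auto simp: Sg_def)
  have ph: "phi s p = phi3 k l m p" for p using t by (simp add: phi_def)
  show ?thesis
  proof (cases "k = l")
    case True
    have "(cmod (phi s p))^2 = (if p = k then 1 else 0)" for p
      using True by (simp add: ph phi3_def dl_def)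
    then show ?thesis using t unfolding unit_vector_def by simp
  next
    case False
    have n: "cmod (\<i> ^ m / complex_of_real (sqrt 2)) = 1 / sqrt 2"
      by (simp add: norm_divide norm_power)
    have n1: "cmod (1 / complex_of_real (sqrt 2)) = 1 / sqrt 2"
      by (simp add: norm_divide)
    have "(cmod (phi s p))^2 = (if p = k then 1/2 else 0) + (if p = l then 1/2 else 0)" for p
      using False n n1 by (cases "p = k"; cases "p = l"; simp add: ph phi3_def dl_def power_divide)
    then have "(\<Sum>p<D. (cmod (phi s p))^2) = (\<Sum>p<D. (if p = k then 1/2 else 0) + (if p = l then 1/2 else 0))"
      by simp
    also have "\<dots> = 1" using t by (simp add: sum.distrib)
    finally show ?thesis unfolding unit_vector_def .
  qed
qed

definition ddr :: "nat \<times> nat \<Rightarrow> real" where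
  "ddr p = (if fst p = snd p then 1 else 0)"

definition P0 :: "nat \<Rightarrow> nat \<times> nat \<Rightarrow> nat \<times> nat \<Rightarrow> complex" where
  "P0 D p q = complex_of_real (ddr p * ddr q / real D)"

definition M0 :: "nat \<Rightarrow> nat \<Rightarrow> nat \<times> nat \<Rightarrow> nat \<times> nat \<Rightarrow> complex" where
  "M0 D a = (if a = 0 then P0 D else (\<lambda>p q. (if p = q then 1 else 0) - P0 D p q))"

lemma sum_times: "(\<Sum>p\<in>A \<times> B. f p) = (\<Sum>a\<in>A. \<Sum>b\<in>B. f (a,b))"
  by (simp add: sum.cartesian_product)

lemma sum_ddr2: "(\<Sum>p\<in>{..<D} \<times> {..<D}. (ddr p)^2) = real D"
proof -
  have "(\<Sum>p\<in>{..<D} \<times> {..<D}. (ddr p)^2) = (\<Sum>a<D. \<Sum>b<D. if b = a then 1 else 0)"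
    unfolding sum_times by (intro sum.cong refl) (simp add: ddr_def eq_commute)
  also have "\<dots> = real D" by simp
  finally show ?thesis .
qed

lemma cnj_sq: "cnj w * w = complex_of_real ((cmod w)^2)"
  by (metis complex_norm_square mult.commute of_real_power)

lemma qf_P0:
  "qf ({..<D} \<times> {..<D}) (P0 D) v =
     complex_of_real ((cmod (\<Sum>p\<in>{..<D} \<times> {..<D}. complex_of_real (ddr p) * v p))^2 / real D)"
proof -
  let ?I = "{..<D} \<times> {..<D}"
  define w where "w = (\<Sum>p\<in>?I. complex_of_real (ddr p) * v p)"
  have "qf ?I (P0 D) v = (\<Sum>p\<in>?I. \<Sum>q\<in>?I. (cnj (v p) * complex_of_real (ddr p)) * (complex_of_real (ddr q) * v q) / of_nat D)"
    unfolding qf_def P0_def by (intro sum.cong refl) (simp add: field_simps)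
  also have "\<dots> = (\<Sum>p\<in>?I. cnj (v p) * complex_of_real (ddr p)) * (\<Sum>q\<in>?I. complex_of_real (ddr q) * v q) / of_nat D"
    by (simp only: sum_product sum_divide_distrib)
  also have "(\<Sum>p\<in>?I. cnj (v p) * complex_of_real (ddr p)) = cnj w"
    unfolding w_def cnj_sum by (simp add: mult.commute)
  also have "cnj w * (\<Sum>q\<in>?I. complex_of_real (ddr q) * v q) / of_nat D = complex_of_real ((cmod w)^2 / real D)"
    unfolding w_def[symmetric] cnj_sq by simp
  finally show ?thesis unfolding w_def .
qed

lemma psd_P0: "psd_on ({..<D} \<times> {..<D}) (P0 D)"
  unfolding psd_qf qf_P0 by (simp add: less_eq_complex_def)

lemma cs_bound:
  "(cmod (\<Sum>p\<in>{..<D} \<times> {..<D}. complex_of_real (ddr p) * v p))^2 \<le> real D * (\<Sum>p\<in>{..<D} \<times> {..<D}. (cmod (v p))^2)"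
proof -
  let ?I = "{..<D} \<times> {..<D}"
  have "cmod (\<Sum>p\<in>?I. complex_of_real (ddr p) * v p) \<le> (\<Sum>p\<in>?I. cmod (complex_of_real (ddr p) * v p))"
    by (rule norm_sum)
  also have "\<dots> = (\<Sum>p\<in>?I. \<bar>ddr p\<bar> * \<bar>cmod (v p)\<bar>)"
    by (simp add: norm_mult)
  also have "\<dots> \<le> L2_set ddr ?I * L2_set (\<lambda>p. cmod (v p)) ?I"
    by (rule L2_set_mult_ineq)
  finally have a: "cmod (\<Sum>p\<in>?I. complex_of_real (ddr p) * v p) \<le> L2_set ddr ?I * L2_set (\<lambda>p. cmod (v p)) ?I" .
  have b: "(L2_set ddr ?I * L2_set (\<lambda>p. cmod (v p)) ?I)^2 = real D * (\<Sum>p\<in>?I. (cmod (v p))^2)"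
    unfolding L2_set_def power_mult_distrib sum_ddr2
    by (simp add: sum_nonneg)
  show ?thesis using power_mono[OF a norm_ge_zero, of 2] b by simp
qed

lemma psd_IP0:
  assumes "0 < D"
  shows "psd_on ({..<D} \<times> {..<D}) (\<lambda>p q. (if p = q then 1 else 0) - P0 D p q)"
  unfolding psd_qf
proof
  fix v
  let ?I = "{..<D} \<times> {..<D}"
  define w where "w = (\<Sum>p\<in>?I. complex_of_real (ddr p) * v p)"
  have "qf ?I (\<lambda>p q. (if p = q then 1 else 0) - P0 D p q) v = qf ?I (\<lambda>p q. if p = q then 1 else 0) v - qf ?I (P0 D) v"
    unfolding qf_def by (simp add: algebra_simps sum_subtractf)
  also have "qf ?I (\<lambda>p q. if p = q then 1 else 0) v = complex_of_real (\<Sum>p\<in>?I. (cmod (v p))^2)"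
  proof -
    have "(\<Sum>c\<in>?I. cnj (v r) * (if r = c then 1 else 0) * v c) = complex_of_real ((cmod (v r))^2)" if "r \<in> ?I" for r
    proof -
      have "(\<Sum>c\<in>?I. cnj (v r) * (if r = c then 1 else 0) * v c) = (\<Sum>c\<in>?I. if r = c then cnj (v r) * v r else 0)"
        by (intro sum.cong refl) auto
      also have "\<dots> = cnj (v r) * v r" using that by simp
      finally show ?thesis unfolding cnj_sq .
    qed
    then show ?thesis unfolding qf_def by simp
  qed
  finally have e: "qf ?I (\<lambda>p q. (if p = q then 1 else 0) - P0 D p q) v =
      complex_of_real ((\<Sum>p\<in>?I. (cmod (v p))^2) - (cmod w)^2 / real D)"
    unfolding qf_P0 w_def by simp
  have "(cmod w)^2 / real D \<le> (\<Sum>p\<in>?I. (cmod (v p))^2)"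
    using cs_bound[where D=D and v=v] assms unfolding w_def by (simp add: divide_le_eq mult.commute)
  then show "0 \<le> qf ?I (\<lambda>p q. (if p = q then 1 else 0) - P0 D p q) v"
    unfolding e by (simp add: less_eq_complex_def)
qed

lemma povm_M0:
  assumes "0 < D"
  shows "is_POVM ({..<D} \<times> {..<D}) {0,1} (M0 D)"
  unfolding is_POVM_def M0_def using psd_P0 psd_IP0[OF assms] by auto



lemma bubble4:
  "(\<Sum>s\<in>T. \<Sum>j\<in>A. \<Sum>k\<in>B. \<Sum>j'\<in>C. \<Sum>k'\<in>D. G s j k j' k') =
   (\<Sum>j\<in>A. \<Sum>k\<in>B. \<Sum>j'\<in>C. \<Sum>k'\<in>D. \<Sum>s\<in>T. (G s j k j' k' :: complex))"
  apply (simp only: sum.swap[where B=D])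
  apply (simp only: sum.swap[where B=C])
  apply (simp only: sum.swap[where B=B])
  apply (simp only: sum.swap[where B=A])
  done

lemma perm5:
  "(\<Sum>j\<in>A. \<Sum>k\<in>B. \<Sum>j'\<in>C. \<Sum>k'\<in>D. \<Sum>t\<in>E. F t j k j' k') =
   (\<Sum>t\<in>E. \<Sum>j'\<in>C. \<Sum>j\<in>A. \<Sum>k'\<in>D. \<Sum>k\<in>B. (F t j k j' k' :: complex))"
  apply (simp only: sum.swap[where B=B])
  apply (simp only: sum.swap[where B=D])
  apply (simp only: sum.swap[where B=A])
  apply (simp only: sum.swap[where B=C])
  done


definition Xv :: "(nat list \<Rightarrow> complex) \<Rightarrow> nat list \<Rightarrow> nat list \<Rightarrow> complex" where
  "Xv v r c = cnj (v r) * v c"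

definition cS :: "nat \<Rightarrow> (nat \<Rightarrow> nat) \<Rightarrow> (nat list \<Rightarrow> complex) \<Rightarrow> nat list \<Rightarrow> complex" where
  "cS N d v s = (\<Sum>r\<in>idx N d. \<Sum>c\<in>idx N d. Xv v r c * (\<Prod>i<N. gg (r ! i) (c ! i) (s ! i)))"

definition Phi :: "nat \<Rightarrow> nat list \<Rightarrow> nat list \<Rightarrow> nat list \<Rightarrow> complex" where
  "Phi N s p q = (\<Prod>i<N. phi (s ! i) (p ! i) * cnj (phi (s ! i) (q ! i)))"

lemma finite_idx: "finite (idx N d)"
  unfolding idx_def by (rule finite_tuples) simp

lemma idx_nth: "j \<in> idx N d \<Longrightarrow> i < N \<Longrightarrow> j ! i < d i"
  by (auto simp: idx_def tuples_def)

lemma exp1: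
  assumes k: "k \<in> idx N d" and k': "k' \<in> idx N d"
  shows "(\<Sum>s\<in>tuples N (\<lambda>i. Sg (d i)). cS N d v s * Phi N s k' k) = Xv v k' k"
proof -
  let ?T = "tuples N (\<lambda>i. Sg (d i))"
  let ?I = "idx N d"
  have "(\<Sum>s\<in>?T. cS N d v s * Phi N s k' k) =
        (\<Sum>s\<in>?T. \<Sum>r\<in>?I. \<Sum>c\<in>?I. Xv v r c * ((\<Prod>i<N. gg (r ! i) (c ! i) (s ! i)) * Phi N s k' k))"
    unfolding cS_def by (simp add: sum_distrib_right mult.assoc)
  also have "\<dots> = (\<Sum>r\<in>?I. \<Sum>s\<in>?T. \<Sum>c\<in>?I. Xv v r c * ((\<Prod>i<N. gg (r ! i) (c ! i) (s ! i)) * Phi N s k' k))"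
    by (rule sum.swap)
  also have "\<dots> = (\<Sum>r\<in>?I. \<Sum>c\<in>?I. \<Sum>s\<in>?T. Xv v r c * ((\<Prod>i<N. gg (r ! i) (c ! i) (s ! i)) * Phi N s k' k))"
    by (rule sum.cong[OF refl], rule sum.swap)
  also have "\<dots> = (\<Sum>r\<in>?I. \<Sum>c\<in>?I. Xv v r c * ((\<Prod>i<N. dl (k' ! i) (r ! i)) * (\<Prod>i<N. dl (k ! i) (c ! i))))"
  proof (rule sum.cong[OF refl], rule sum.cong[OF refl])
    fix r c assume r: "r \<in> ?I" and c: "c \<in> ?I"
    have "(\<Sum>s\<in>?T. (\<Prod>i<N. gg (r ! i) (c ! i) (s ! i)) * Phi N s k' k) =
          (\<Sum>s\<in>?T. \<Prod>i<N. gg (r ! i) (c ! i) (s ! i) * (phi (s ! i) (k' ! i) * cnj (phi (s ! i) (k ! i))))"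
      unfolding Phi_def by (simp add: prod.distrib)
    also have "\<dots> = (\<Prod>i<N. \<Sum>x\<in>Sg (d i). gg (r ! i) (c ! i) x * (phi x (k' ! i) * cnj (phi x (k ! i))))"
      by (rule sum_prod_tuples) (simp add: finite_Sg)
    also have "\<dots> = (\<Prod>i<N. dl (k' ! i) (r ! i) * dl (k ! i) (c ! i))"
      by (rule prod.cong[OF refl]) (simp add: loc idx_nth[OF r] idx_nth[OF c])
    also have "\<dots> = (\<Prod>i<N. dl (k' ! i) (r ! i)) * (\<Prod>i<N. dl (k ! i) (c ! i))"
      by (rule prod.distrib)
    finally show "(\<Sum>s\<in>?T. Xv v r c * ((\<Prod>i<N. gg (r ! i) (c ! i) (s ! i)) * Phi N s k' k)) =
          Xv v r c * ((\<Prod>i<N. dl (k' ! i) (r ! i)) * (\<Prod>i<N. dl (k ! i) (c ! i)))"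
      unfolding sum_distrib_left[symmetric] by (rule arg_cong[where f="\<lambda>x. Xv v r c * x"])
  qed
  also have "\<dots> = (\<Sum>r\<in>?I. (\<Sum>c\<in>?I. (Xv v r c * (\<Prod>i<N. dl (k' ! i) (r ! i))) * (\<Prod>i<N. if k ! i = c ! i then 1 else 0)))"
    unfolding dl_def by (simp add: mult.assoc mult.left_commute)
  also have "\<dots> = (\<Sum>r\<in>?I. Xv v r k * (\<Prod>i<N. if k' ! i = r ! i then 1 else 0))"
    using k unfolding idx_def dl_def by (intro sum.cong refl sum_delta_tuples) auto
  also have "\<dots> = Xv v k' k"
    using k' unfolding idx_def by (intro sum_delta_tuples) auto
  finally show ?thesis .
qed

lemma cnj_Phi: "cnj (Phi N s p q) = Phi N s q p"
  unfolding Phi_def by (simp add: mult.commute)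

lemma exp2:
  assumes k: "k \<in> idx N d" and k': "k' \<in> idx N d"
  shows "(\<Sum>s\<in>tuples N (\<lambda>i. Sg (d i)). complex_of_real (Re (cS N d v s)) * Phi N s k' k) = Xv v k' k"
proof -
  let ?T = "tuples N (\<lambda>i. Sg (d i))"
  have re: "complex_of_real (Re z) = (z + cnj z) / 2" for z
    by (simp add: complex_add_cnj)
  have "(\<Sum>s\<in>?T. cnj (cS N d v s) * Phi N s k' k) = cnj (\<Sum>s\<in>?T. cS N d v s * Phi N s k k')"
    by (simp add: cnj_Phi)
  also have "\<dots> = Xv v k' k" unfolding exp1[OF k' k] by (simp add: Xv_def mult.commute)
  finally have a: "(\<Sum>s\<in>?T. cnj (cS N d v s) * Phi N s k' k) = Xv v k' k" .
  have "(\<Sum>s\<in>?T. complex_of_real (Re (cS N d v s)) * Phi N s k' k) =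
        ((\<Sum>s\<in>?T. cS N d v s * Phi N s k' k) + (\<Sum>s\<in>?T. cnj (cS N d v s) * Phi N s k' k)) / 2"
    unfolding re by (simp add: sum.distrib[symmetric] sum_divide_distrib algebra_simps)
  also have "\<dots> = Xv v k' k" unfolding a exp1[OF k k'] by simp
  finally show ?thesis .
qed



definition beta :: "nat \<Rightarrow> (nat \<Rightarrow> nat) \<Rightarrow> (nat list \<Rightarrow> complex) \<Rightarrow> nat list \<Rightarrow> nat list \<Rightarrow> real" where
  "beta N d v s a = (if a = replicate N 0 then Re (cS N d v s) else 0)"

definition TT :: "nat \<Rightarrow> (nat \<Rightarrow> nat) \<Rightarrow> (nat \<Rightarrow> nat \<Rightarrow> nat \<times> nat \<Rightarrow> nat \<times> nat \<Rightarrow> complex)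
   \<Rightarrow> (nat list \<Rightarrow> nat list \<Rightarrow> complex) \<Rightarrow> (nat list \<Rightarrow> complex) \<Rightarrow> complex" where
  "TT N d M Z v = (\<Sum>j\<in>idx N d. \<Sum>k\<in>idx N d. \<Sum>j'\<in>idx N d. \<Sum>k'\<in>idx N d.
      ((\<Prod>i<N. M i 0 (j ! i, k ! i) (j' ! i, k' ! i)) * Z j' j) * Xv v k' k)"

lemma prod_rep: "(\<Prod>i<N. M i (replicate N 0 ! i) (p i) (q i)) = (\<Prod>i<N. M i 0 (p i) (q i) :: complex)"
  by (rule prod.cong) auto

lemma red:
  "expected_payoff N d d (\<lambda>i. Sg (d i)) (\<lambda>i. {0,1}) (\<lambda>i. phi) (beta N d v) M Z = Re (TT N d M Z v)"
proof -
  let ?T = "tuples N (\<lambda>i. Sg (d i))"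
  let ?O = "tuples N (\<lambda>i. {0,1::nat})"
  let ?I = "idx N d"
  let ?a0 = "replicate N (0::nat)"
  let ?A = "\<lambda>j k j' k'. (\<Prod>i<N. M i 0 (j ! i, k ! i) (j' ! i, k' ! i)) * Z j' j"
  have a0: "?a0 \<in> ?O" by (auto simp: tuples_def)
  have finO: "finite ?O" by (rule finite_tuples) simp
  have corr: "correlation N d d (\<lambda>i. phi) M Z s ?a0 =
      (\<Sum>j\<in>?I. \<Sum>k\<in>?I. \<Sum>j'\<in>?I. \<Sum>k'\<in>?I. ?A j k j' k' * Phi N s k' k)" for s
    unfolding correlation_def Phi_def by (intro sum.cong refl arg_cong2[where f="(*)"] prod.cong) auto
  have inner: "(\<Sum>a\<in>?O. beta N d v s a * Re (correlation N d d (\<lambda>i. phi) M Z s a)) =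
      Re (cS N d v s) * Re (correlation N d d (\<lambda>i. phi) M Z s ?a0)" for s
  proof -
    have "(\<Sum>a\<in>?O. beta N d v s a * Re (correlation N d d (\<lambda>i. phi) M Z s a)) =
        (\<Sum>a\<in>?O. if a = ?a0 then Re (cS N d v s) * Re (correlation N d d (\<lambda>i. phi) M Z s ?a0) else 0)"
      by (rule sum.cong[OF refl]) (simp add: beta_def)
    also have "\<dots> = Re (cS N d v s) * Re (correlation N d d (\<lambda>i. phi) M Z s ?a0)"
      using finO a0 by simp
    finally show ?thesis .
  qed
  have "expected_payoff N d d (\<lambda>i. Sg (d i)) (\<lambda>i. {0,1}) (\<lambda>i. phi) (beta N d v) M Z =
      (\<Sum>s\<in>?T. Re (cS N d v s) * Re (correlation N d d (\<lambda>i. phi) M Z s ?a0))"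
    unfolding expected_payoff_def using inner by simp
  also have "\<dots> = Re (\<Sum>s\<in>?T. complex_of_real (Re (cS N d v s)) * correlation N d d (\<lambda>i. phi) M Z s ?a0)"
    by simp
  also have "(\<Sum>s\<in>?T. complex_of_real (Re (cS N d v s)) * correlation N d d (\<lambda>i. phi) M Z s ?a0) =
      (\<Sum>s\<in>?T. \<Sum>j\<in>?I. \<Sum>k\<in>?I. \<Sum>j'\<in>?I. \<Sum>k'\<in>?I. complex_of_real (Re (cS N d v s)) * (?A j k j' k' * Phi N s k' k))"
    unfolding corr by (simp only: sum_distrib_left)
  also have "\<dots> = (\<Sum>j\<in>?I. \<Sum>k\<in>?I. \<Sum>j'\<in>?I. \<Sum>k'\<in>?I. \<Sum>s\<in>?T. complex_of_real (Re (cS N d v s)) * (?A j k j' k' * Phi N s k' k))"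
    by (rule bubble4)
  also have "\<dots> = (\<Sum>j\<in>?I. \<Sum>k\<in>?I. \<Sum>j'\<in>?I. \<Sum>k'\<in>?I. ?A j k j' k' * Xv v k' k)"
  proof (intro sum.cong[OF refl])
    fix j k j' k' assume "k \<in> ?I" "k' \<in> ?I"
    then have "(\<Sum>s\<in>?T. complex_of_real (Re (cS N d v s)) * Phi N s k' k) = Xv v k' k" by (rule exp2)
    then show "(\<Sum>s\<in>?T. complex_of_real (Re (cS N d v s)) * (?A j k j' k' * Phi N s k' k)) = ?A j k j' k' * Xv v k' k"
    proof -
      have "(\<Sum>s\<in>?T. complex_of_real (Re (cS N d v s)) * (?A j k j' k' * Phi N s k' k)) =
          ?A j k j' k' * (\<Sum>s\<in>?T. complex_of_real (Re (cS N d v s)) * Phi N s k' k)"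
        unfolding sum_distrib_left by (rule sum.cong[OF refl]) (simp only: mult.left_commute)
      then show ?thesis using \<open>(\<Sum>s\<in>?T. complex_of_real (Re (cS N d v s)) * Phi N s k' k) = Xv v k' k\<close> by simp
    qed
  qed
  also have "\<dots> = TT N d M Z v" unfolding TT_def ..
  finally show ?thesis .
qed



lemma P0_pair: "P0 D (a,b) (a',b') = complex_of_real (1 / real D) * (if a = b then 1 else 0) * (if a' = b' then 1 else 0)"
  by (simp add: P0_def ddr_def)

lemma wside:
  "TT N d (\<lambda>i. M0 (d i)) W v = complex_of_real (\<Prod>i<N. 1 / real (d i)) * qf (idx N d) W v"
proof -
  let ?I = "idx N d"
  define C where "C = complex_of_real (\<Prod>i<N. 1 / real (d i))"
  define A where "A j k = (\<Prod>i<N. if j ! i = k ! i then 1 else (0::complex))" for j k :: "nat list"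
  have P: "(\<Prod>i<N. M0 (d i) 0 (j ! i, k ! i) (j' ! i, k' ! i)) = C * A j k * A j' k'" for j k j' k'
  proof -
    have "(\<Prod>i<N. M0 (d i) 0 (j ! i, k ! i) (j' ! i, k' ! i)) =
        (\<Prod>i<N. complex_of_real (1 / real (d i)) * (if j ! i = k ! i then 1 else 0) * (if j' ! i = k' ! i then 1 else 0))"
      by (simp add: M0_def P0_pair)
    also have "\<dots> = C * A j k * A j' k'"
      by (simp only: prod.distrib C_def A_def of_real_prod)
    finally show ?thesis .
  qed
  have s1: "(\<Sum>k'\<in>?I. ((\<Prod>i<N. M0 (d i) 0 (j ! i, k ! i) (j' ! i, k' ! i)) * W j' j) * Xv v k' k) =
      C * A j k * W j' j * v k * cnj (v j')" if "j' \<in> ?I" for j k j'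
  proof -
    have "(\<Sum>k'\<in>?I. ((\<Prod>i<N. M0 (d i) 0 (j ! i, k ! i) (j' ! i, k' ! i)) * W j' j) * Xv v k' k) =
        (\<Sum>k'\<in>?I. (C * A j k * W j' j * v k * cnj (v k')) * (\<Prod>i<N. if j' ! i = k' ! i then 1 else 0))"
      unfolding P Xv_def A_def by (rule sum.cong[OF refl]) (simp only: mult_ac)
    also have "\<dots> = C * A j k * W j' j * v k * cnj (v j')"
      using that unfolding idx_def by (intro sum_delta_tuples) auto
    finally show ?thesis .
  qed
  have s2: "(\<Sum>k\<in>?I. \<Sum>j'\<in>?I. C * A j k * W j' j * v k * cnj (v j')) =
      (\<Sum>j'\<in>?I. C * W j' j * cnj (v j')) * v j" if "j \<in> ?I" for j
  proof -
    have "(\<Sum>k\<in>?I. \<Sum>j'\<in>?I. C * A j k * W j' j * v k * cnj (v j')) =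
        (\<Sum>k\<in>?I. ((\<Sum>j'\<in>?I. C * W j' j * cnj (v j')) * v k) * (\<Prod>i<N. if j ! i = k ! i then 1 else 0))"
      unfolding A_def sum_distrib_right by (intro sum.cong refl) (simp only: mult_ac)
    also have "\<dots> = (\<Sum>j'\<in>?I. C * W j' j * cnj (v j')) * v j"
      using that unfolding idx_def by (intro sum_delta_tuples) auto
    finally show ?thesis .
  qed
  have "TT N d (\<lambda>i. M0 (d i)) W v = (\<Sum>j\<in>?I. \<Sum>k\<in>?I. \<Sum>j'\<in>?I. C * A j k * W j' j * v k * cnj (v j'))"
    unfolding TT_def using s1 by simp
  also have "\<dots> = (\<Sum>j\<in>?I. (\<Sum>j'\<in>?I. C * W j' j * cnj (v j')) * v j)"
    using s2 by simp
  also have "\<dots> = C * (\<Sum>j\<in>?I. \<Sum>j'\<in>?I. cnj (v j') * W j' j * v j)"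
    unfolding sum_distrib_left sum_distrib_right by (intro sum.cong refl) (simp only: mult_ac)
  also have "\<dots> = C * qf ?I W v"
    unfolding qf_def by (subst sum.swap) (rule refl)
  finally show ?thesis unfolding C_def .
qed



lemma qside:
  assumes psdM: "\<forall>i<N. psd_on ({..<d i} \<times> {..<d i}) (M i 0)" and psdR: "psd_on (idx N d) \<rho>"
  shows "0 \<le> TT N d M \<rho> v"
proof -
  let ?I = "idx N d"
  have ex: "\<forall>i. \<exists>(n::nat) b. i < N \<longrightarrow> (\<forall>p\<in>{..<d i} \<times> {..<d i}. \<forall>q\<in>{..<d i} \<times> {..<d i}.
      M i 0 p q = (\<Sum>t<n. b t p * cnj (b t q)))"
  proof
    fix i
    show "\<exists>(n::nat) b. i < N \<longrightarrow> (\<forall>p\<in>{..<d i} \<times> {..<d i}. \<forall>q\<in>{..<d i} \<times> {..<d i}.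
      M i 0 p q = (\<Sum>t<n. b t p * cnj (b t q)))"
    proof (cases "i < N")
      case True
      then show ?thesis using psd_dec[of "{..<d i} \<times> {..<d i}" "M i 0"] psdM by auto
    qed auto
  qed
  then obtain nn :: "nat \<Rightarrow> nat" where "\<forall>i. \<exists>b. i < N \<longrightarrow> (\<forall>p\<in>{..<d i} \<times> {..<d i}. \<forall>q\<in>{..<d i} \<times> {..<d i}.
      M i 0 p q = (\<Sum>t<nn i. b t p * cnj (b t q)))"
    by (rule choice[THEN exE])
  then obtain bb where dec: "\<forall>i. i < N \<longrightarrow> (\<forall>p\<in>{..<d i} \<times> {..<d i}. \<forall>q\<in>{..<d i} \<times> {..<d i}.
      M i 0 p q = (\<Sum>t<nn i. bb i t p * cnj (bb i t q)))"
    by (rule choice[THEN exE])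
  let ?T = "tuples N (\<lambda>i. {..<nn i})"
  define B where "B \<tau> j k = (\<Prod>i<N. bb i (\<tau> ! i) (j ! i, k ! i))" for \<tau> j k :: "nat list"
  have step1: "(\<Prod>i<N. M i 0 (j ! i, k ! i) (j' ! i, k' ! i)) = (\<Sum>\<tau>\<in>?T. B \<tau> j k * cnj (B \<tau> j' k'))"
    if "j \<in> ?I" "k \<in> ?I" "j' \<in> ?I" "k' \<in> ?I" for j k j' k'
  proof -
    have "(\<Prod>i<N. M i 0 (j ! i, k ! i) (j' ! i, k' ! i)) =
        (\<Prod>i<N. \<Sum>t\<in>{..<nn i}. bb i t (j ! i, k ! i) * cnj (bb i t (j' ! i, k' ! i)))"
      by (rule prod.cong[OF refl]) (use dec idx_nth[OF that(1)] idx_nth[OF that(2)] idx_nth[OF that(3)] idx_nth[OF that(4)] in auto)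
    also have "\<dots> = (\<Sum>\<tau>\<in>?T. \<Prod>i<N. bb i (\<tau> ! i) (j ! i, k ! i) * cnj (bb i (\<tau> ! i) (j' ! i, k' ! i)))"
      by (rule sum_prod_tuples[symmetric]) simp
    also have "\<dots> = (\<Sum>\<tau>\<in>?T. B \<tau> j k * cnj (B \<tau> j' k'))"
      unfolding B_def by (simp only: prod.distrib cnj_prod)
    finally show ?thesis .
  qed
  define u where "u \<tau> j = (\<Sum>k\<in>?I. B \<tau> j k * v k)" for \<tau> j
  have "TT N d M \<rho> v = (\<Sum>j\<in>?I. \<Sum>k\<in>?I. \<Sum>j'\<in>?I. \<Sum>k'\<in>?I. \<Sum>\<tau>\<in>?T.
          B \<tau> j k * cnj (B \<tau> j' k') * \<rho> j' j * (cnj (v k') * v k))"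
    unfolding TT_def Xv_def by (intro sum.cong refl) (simp add: step1 sum_distrib_right)
  also have "\<dots> = (\<Sum>\<tau>\<in>?T. \<Sum>j'\<in>?I. \<Sum>j\<in>?I. \<Sum>k'\<in>?I. \<Sum>k\<in>?I.
          B \<tau> j k * cnj (B \<tau> j' k') * \<rho> j' j * (cnj (v k') * v k))"
    by (rule perm5)
  also have "\<dots> = (\<Sum>\<tau>\<in>?T. qf ?I \<rho> (u \<tau>))"
    unfolding qf_def u_def
    by (intro sum.cong refl) (simp add: sum_distrib_left sum_distrib_right mult_ac)
  finally have e: "TT N d M \<rho> v = (\<Sum>\<tau>\<in>?T. qf ?I \<rho> (u \<tau>))" .
  show ?thesis unfolding e
    by (rule sum_nonneg) (use psdR in \<open>simp add: psd_qf\<close>)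
qed


lemma re_ofreal_mult: "Re (complex_of_real c * z) = c * Re z"
  by simp

lemma qf_herm:
  assumes "hermitian_on I W"
  shows "cnj (qf I W v) = qf I W v"
proof -
  have h: "\<And>r c. r \<in> I \<Longrightarrow> c \<in> I \<Longrightarrow> W c r = cnj (W r c)"
    using assms unfolding hermitian_on_def by blast
  have "cnj (qf I W v) = (\<Sum>r\<in>I. \<Sum>c\<in>I. cnj (v c) * W c r * v r)"
    unfolding qf_def cnj_sum
  proof (intro sum.cong refl)
    fix r c assume "r \<in> I" "c \<in> I"
    then show "cnj (cnj (v r) * W r c * v c) = cnj (v c) * W c r * v r"
      using h[OF \<open>r \<in> I\<close> \<open>c \<in> I\<close>] by (simp add: mult_ac)
  qed
  also have "\<dots> = qf I W v"
    unfolding qf_def by (rule sum.swap)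
  finally show ?thesis .
qed

theorem theorem2:
  fixes N :: nat and d :: "nat \<Rightarrow> nat" and W :: "nat list \<Rightarrow> nat list \<Rightarrow> complex"
  assumes "\<forall>i<N. 0 < d i"
    and "is_POPT N d W"
    and "\<not> is_density N d W"
  shows "\<exists>(e :: nat \<Rightarrow> nat) (S :: nat \<Rightarrow> nat set) (Out :: nat \<Rightarrow> nat set)
            (\<psi> :: nat \<Rightarrow> nat \<Rightarrow> nat \<Rightarrow> complex) (\<beta> :: nat list \<Rightarrow> nat list \<Rightarrow> real)
            (M :: nat \<Rightarrow> nat \<Rightarrow> nat \<times> nat \<Rightarrow> nat \<times> nat \<Rightarrow> complex).
           semiquantum_game N e S Out \<psi> \<and>
           local_measurements N d e Out M \<and>
           expected_payoff N d e S Out \<psi> \<beta> M W < 0 \<and>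
           (\<forall>\<rho> M'. is_density N d \<rho> \<longrightarrow> local_measurements N d e Out M' \<longrightarrow>
              0 \<le> expected_payoff N d e S Out \<psi> \<beta> M' \<rho>)"
proof -
  have hW: "hermitian_on (idx N d) W" and tr: "op_trace (idx N d) W = 1"
    using assms(2) by (auto simp: is_POPT_def)
  have "\<not> psd_on (idx N d) W" using assms(3) hW tr by (simp add: is_density_def)
  then obtain v where nv: "\<not> 0 \<le> qf (idx N d) W v" by (auto simp: psd_qf)
  have "cnj (qf (idx N d) W v) = qf (idx N d) W v" by (rule qf_herm[OF hW])
  then have im: "Im (qf (idx N d) W v) = 0" by (simp add: complex_eq_iff)
  have re: "Re (qf (idx N d) W v) < 0" using nv im by (auto simp: less_eq_complex_def)
  have Cpos: "0 < (\<Prod>i<N. 1 / real (d i))"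
    using assms(1) by (intro prod_pos) auto
  have game: "semiquantum_game N d (\<lambda>i. Sg (d i)) (\<lambda>i. {0,1}) (\<lambda>i. phi)"
    unfolding semiquantum_game_def using assms(1) finite_Sg unit_phi by auto
  have meas: "local_measurements N d d (\<lambda>i. {0,1}) (\<lambda>i. M0 (d i))"
    unfolding local_measurements_def using assms(1) povm_M0 by auto
  have neg: "expected_payoff N d d (\<lambda>i. Sg (d i)) (\<lambda>i. {0,1}) (\<lambda>i. phi) (beta N d v) (\<lambda>i. M0 (d i)) W < 0"
  proof -
    have "expected_payoff N d d (\<lambda>i. Sg (d i)) (\<lambda>i. {0,1}) (\<lambda>i. phi) (beta N d v) (\<lambda>i. M0 (d i)) W =
        (\<Prod>i<N. 1 / real (d i)) * Re (qf (idx N d) W v)"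
      by (simp only: red wside re_ofreal_mult)
    also have "\<dots> < 0" using Cpos re by (rule mult_pos_neg)
    finally show ?thesis .
  qed
  have pos: "0 \<le> expected_payoff N d d (\<lambda>i. Sg (d i)) (\<lambda>i. {0,1}) (\<lambda>i. phi) (beta N d v) M' \<rho>"
    if "is_density N d \<rho>" "local_measurements N d d (\<lambda>i. {0,1}) M'" for \<rho> M'
  proof -
    have psdR: "psd_on (idx N d) \<rho>" using that(1) by (simp add: is_density_def)
    have psdM: "\<forall>i<N. psd_on ({..<d i} \<times> {..<d i}) (M' i 0)"
      using that(2) by (simp add: local_measurements_def is_POVM_def)
    have "0 \<le> TT N d M' \<rho> v" using psdM psdR by (rule qside)
    then show ?thesis unfolding red by (simp add: less_eq_complex_def)
  qed
  have all: "semiquantum_game N d (\<lambda>i. Sg (d i)) (\<lambda>i. {0,1}) (\<lambda>i. phi) \<and>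
      local_measurements N d d (\<lambda>i. {0,1}) (\<lambda>i. M0 (d i)) \<and>
      expected_payoff N d d (\<lambda>i. Sg (d i)) (\<lambda>i. {0,1}) (\<lambda>i. phi) (beta N d v) (\<lambda>i. M0 (d i)) W < 0 \<and>
      (\<forall>\<rho> M'. is_density N d \<rho> \<longrightarrow> local_measurements N d d (\<lambda>i. {0,1}) M' \<longrightarrow>
         0 \<le> expected_payoff N d d (\<lambda>i. Sg (d i)) (\<lambda>i. {0,1}) (\<lambda>i. phi) (beta N d v) M' \<rho>)"
    using game meas neg pos by simp
  show ?thesis
    apply (rule exI[of _ d], rule exI[of _ "\<lambda>i. Sg (d i)"], rule exI[of _ "\<lambda>i. {0,1}"],
        rule exI[of _ "\<lambda>i. phi"], rule exI[of _ "beta N d v"], rule exI[of _ "\<lambda>i. M0 (d i)"])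
    apply (rule all)
    done
qed

end
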